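(* Under Assumptions 1–4 below, with $\tau\in(0,1]$ and $p\in(0,1]$, the iterates of Algorithm 2Direction satisfy, for every $t\ge0$, $$\begin{aligned}\mathbb E_t\|v^{t+1}-\nabla f(z^{t+1})\|^2&\le\Big(1-\frac\tau2\Big)\|v^t-\nabla f(z^t)\|^2+\frac{2\tau^2\omega}{n^2}\sum_{i=1}^n\|h_i^t-\nabla f_i(z^t)\|^2\\&\quad+\Big(4p\Big(1+\frac{2p}{\tau}\Big)L+\frac{8p\tau^2\omega L_{\max}}{n}\Big)D_f(z^t,y^{t+1})+\Big(2p\Big(1+\frac{2p}{\tau}\Big)L^2+\frac{4p\tau^2\omega\widehat L^2}{n}\Big)\mathbb E_t\|x^{t+1}-y^{t+1}\|^2,\end{aligned}$$ where $D_f(x,y)=f(x)-f(y)-\langle\nabla f(y),x-y\rangle$.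
   Context: Setting: $f=\frac1n\sum_{i=1}^nf_i$, $f_i:\mathbb R^d\to\mathbb R$. Assumption 1: each $f_i$ is $L_i$-smooth, $L_{\max}=\max_iL_i$, and $\widehat L>0$ satisfies $\frac1n\sum_i\|\nabla f_i(x)-\nabla f_i(y)\|^2\le\widehat L^2\|x-y\|^2$ for all $x,y$. Assumption 2: $f$ is $L$-smooth. Assumption 3: each $f_i$ is convex and $f$ is $\mu$-strongly convex ($\mu\ge0$) with minimizer $x^*$. Assumption 4: the randomness of all compressors is drawn independently (of each other, of the coins $c^t$, and of the past). Compressor classes: $\mathbb U(\omega)$ ($\omega\ge0$) = stochastic maps $\mathcal C$ with $\mathbb E\mathcal C(x)=x$, $\mathbb E\|\mathcal C(x)-x\|^2\le\omega\|x\|^2$; $\mathbb B(\alpha)$ ($\alpha\in(0,1]$) = possibly stochastic maps with $\mathbb E\|\mathcal C(x)-x\|^2\le(1-\alpha)\|x\|^2$. Algorithm 2Direction: compressors $\mathcal C_i^{D,y},\mathcal C_i^{D,z}\in\mathbb U(\omega)$ (workers), $\mathcal C^P\in\mathbb B(\alpha)$ (server); parameters $\bar L>0$, $\mu\ge0$, $p\in(0,1]$, $\Gamma_0\ge1$, $\tau\in(0,1]$, $x^0,h_1^0,\dots,h_n^0,k^0,v^0\in\mathbb R^d$. Set $\beta=1/(\omega+1)$, $w^0=z^0=u^0=x^0$, $h^0=\frac1n\sum_ih_i^0$, $\theta_{\min}=\frac14\min\{1,\alpha/p,\tau/p,\beta/p\}$. For $t=0,1,\dots$: let $\bar\theta_{t+1}$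 be the largest root of $p\bar L\Gamma_t\theta^2+p(\bar L+\Gamma_t\mu)\theta-(\bar L+\Gamma_t\mu)=0$, $\theta_{t+1}=\min\{\bar\theta_{t+1},\theta_{\min}\}$, $\gamma_{t+1}=p\theta_{t+1}\Gamma_t/(1-p\theta_{t+1})$, $\Gamma_{t+1}=\Gamma_t+\gamma_{t+1}$; $y^{t+1}=\theta_{t+1}w^t+(1-\theta_{t+1})z^t$; $m_i^{t,y}=\mathcal C_i^{D,y}(\nabla f_i(y^{t+1})-h_i^t)$; $g^{t+1}=h^t+\frac1n\sum_im_i^{t,y}$; $u^{t+1}=\arg\min_x\{\langle g^{t+1},x\rangle+\frac{\bar L+\Gamma_t\mu}{2\gamma_{t+1}}\|x-u^t\|^2+\frac\mu2\|x-y^{t+1}\|^2\}$; $q^{t+1}=\arg\min_x\{\langle k^t,x\rangle+\frac{\bar L+\Gamma_t\mu}{2\gamma_{t+1}}\|x-w^t\|^2+\frac\mu2\|x-y^{t+1}\|^2\}$; $w^{t+1}=q^{t+1}+\mathcal C^P(u^{t+1}-q^{t+1})$; $x^{t+1}=\theta_{t+1}u^{t+1}+(1-\theta_{t+1})z^t$; draw $c^t\sim\mathrm{Bernoulli}(p)$, and set $(k^{t+1},z^{t+1})=(v^t,x^{t+1})$ if $c^t=1$, $(k^{t+1},z^{t+1})=(k^t,z^t)$ if $c^t=0$; $m_i^{t,z}=\mathcal C_i^{D,z}(\nabla f_i(z^{t+1})-h_i^t)$; $h_i^{t+1}=h_i^t+\beta m_i^{t,z}$; $v^{t+1}=(1-\tau)v^t+\tau(h^t+\frac1n\sum_im_i^{t,z})$;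 $h^{t+1}=h^t+\frac\beta n\sum_im_i^{t,z}$. $\mathbb E_t$ denotes conditional expectation given the randomness of the first $t$ iterations. *)

theory Defs
  imports "HOL-Probability.Probability"
begin

definition lsmooth :: "real \<Rightarrow> ('a::euclidean_space \<Rightarrow> real) \<Rightarrow> ('a \<Rightarrow> 'a) \<Rightarrow> bool" where
  "lsmooth L f g \<longleftrightarrow>
     (\<forall>x. (f has_derivative (\<lambda>h. g x \<bullet> h)) (at x)) \<and>
     (\<forall>x y. norm (g x - g y) \<le> L * norm (x - y))"

definition strongly_convex :: "real \<Rightarrow> ('a::real_normed_vector \<Rightarrow> real) \<Rightarrow> bool" where
  "strongly_convex mu f \<longleftrightarrow>
     (\<forall>x y (t::real). 0 \<le> t \<longrightarrow> t \<le> 1 \<longrightarrow>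
        f (t *\<^sub>R x + (1 - t) *\<^sub>R y) \<le> t * f x + (1 - t) * f y - mu / 2 * t * (1 - t) * (norm (x - y))\<^sup>2)"

definition bregman :: "('a::euclidean_space \<Rightarrow> real) \<Rightarrow> ('a \<Rightarrow> 'a) \<Rightarrow> 'a \<Rightarrow> 'a \<Rightarrow> real" where
  "bregman f g x y = f x - f y - g y \<bullet> (x - y)"

text \<open>A stochastic map is represented by a (jointly measurable) map C :: seed => R^d => R^d
  together with a probability distribution S of its random seed.\<close>

definition unbiased_compressor :: "real \<Rightarrow> 's measure \<Rightarrow> ('s \<Rightarrow> 'a::euclidean_space \<Rightarrow> 'a) \<Rightarrow> bool" where
  "unbiased_compressor \<omega> S C \<longleftrightarrow> 0 \<le> \<omega> \<and> prob_space S \<and>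
     (\<lambda>(s, x). C s x) \<in> borel_measurable (S \<Otimes>\<^sub>M borel) \<and>
     (\<forall>x. integrable S (\<lambda>s. C s x) \<and> (\<integral>s. C s x \<partial>S) = x \<and>
          (\<integral>\<^sup>+ s. ennreal ((norm (C s x - x))\<^sup>2) \<partial>S) \<le> ennreal (\<omega> * (norm x)\<^sup>2))"

definition contractive_compressor :: "real \<Rightarrow> 's measure \<Rightarrow> ('s \<Rightarrow> 'a::euclidean_space \<Rightarrow> 'a) \<Rightarrow> bool" where
  "contractive_compressor \<alpha> S C \<longleftrightarrow> 0 < \<alpha> \<and> \<alpha> \<le> 1 \<and> prob_space S \<and>
     (\<lambda>(s, x). C s x) \<in> borel_measurable (S \<Otimes>\<^sub>M borel) \<and>
     (\<forall>x. (\<integral>\<^sup>+ s. ennreal ((norm (C s x - x))\<^sup>2) \<partial>S) \<le> ennreal ((1 - \<alpha>) * (norm x)\<^sup>2))"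

record ('a, 's) alg_params =
  a_n :: nat
  a_grad :: "nat \<Rightarrow> 'a \<Rightarrow> 'a"
  a_Lbar :: real
  a_mu :: real
  a_p :: real
  a_Gamma0 :: real
  a_tau :: real
  a_omega :: real
  a_alpha :: real
  a_x0 :: 'a
  a_h0 :: "nat \<Rightarrow> 'a"
  a_k0 :: 'a
  a_v0 :: 'a
  a_Cy :: "nat \<Rightarrow> 's \<Rightarrow> 'a \<Rightarrow> 'a"
  a_Cz :: "nat \<Rightarrow> 's \<Rightarrow> 'a \<Rightarrow> 'a"
  a_CP :: "'s \<Rightarrow> 'a \<Rightarrow> 'a"

record 'a alg_state =
  st_w :: 'a
  st_z :: 'a
  st_u :: 'a
  st_h :: "nat \<Rightarrow> 'a"
  st_hb :: 'a
  st_k :: 'a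
  st_v :: 'a

text \<open>Randomness of one iteration: seeds of C_i^{D,y} (i<n), seeds of C_i^{D,z} (i<n),
  seed of C^P, and the coin c^t.\<close>
type_synonym 's seed = "(nat \<Rightarrow> 's) \<times> (nat \<Rightarrow> 's) \<times> 's \<times> bool"

definition seed_measure :: "nat \<Rightarrow> (nat \<Rightarrow> 's measure) \<Rightarrow> (nat \<Rightarrow> 's measure) \<Rightarrow> 's measure \<Rightarrow> real
    \<Rightarrow> 's seed measure" where
  "seed_measure n Sy Sz SP p =
     PiM {..<n} Sy \<Otimes>\<^sub>M (PiM {..<n} Sz \<Otimes>\<^sub>M (SP \<Otimes>\<^sub>M measure_pmf (bernoulli_pmf p)))"

definition alg_beta :: "('a, 's) alg_params \<Rightarrow> real" where
  "alg_beta P = 1 / (a_omega P + 1)"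

definition theta_min :: "('a, 's) alg_params \<Rightarrow> real" where
  "theta_min P = 1/4 * min 1 (min (a_alpha P / a_p P) (min (a_tau P / a_p P) (alg_beta P / a_p P)))"

definition theta_bar :: "('a, 's) alg_params \<Rightarrow> real \<Rightarrow> real" where
  "theta_bar P G = (GREATEST \<theta>::real.
      a_p P * a_Lbar P * G * \<theta>\<^sup>2 + a_p P * (a_Lbar P + G * a_mu P) * \<theta> - (a_Lbar P + G * a_mu P) = 0)"

definition theta_next :: "('a, 's) alg_params \<Rightarrow> real \<Rightarrow> real" where
  "theta_next P G = min (theta_bar P G) (theta_min P)"

definition gamma_next :: "('a, 's) alg_params \<Rightarrow> real \<Rightarrow> real" where
  "gamma_next P G = a_p P * theta_next P G * G / (1 - a_p P * theta_next P G)"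

primrec Gam :: "('a, 's) alg_params \<Rightarrow> nat \<Rightarrow> real" where
  "Gam P 0 = a_Gamma0 P"
| "Gam P (Suc t) = Gam P t + gamma_next P (Gam P t)"

text \<open>theta_{t+1}, gamma_{t+1}\<close>
definition alg_theta :: "('a, 's) alg_params \<Rightarrow> nat \<Rightarrow> real" where
  "alg_theta P t = theta_next P (Gam P t)"

definition alg_gamma :: "('a, 's) alg_params \<Rightarrow> nat \<Rightarrow> real" where
  "alg_gamma P t = gamma_next P (Gam P t)"

text \<open>y^{t+1}, computed from the state at time t\<close>
definition alg_y :: "('a::euclidean_space, 's) alg_params \<Rightarrow> nat \<Rightarrow> 'a alg_state \<Rightarrow> 'a" where
  "alg_y P t st = alg_theta P t *\<^sub>R st_w st + (1 - alg_theta P t) *\<^sub>R st_z st"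

definition alg_g :: "('a::euclidean_space, 's) alg_params \<Rightarrow> nat \<Rightarrow> 'a alg_state \<Rightarrow> 's seed \<Rightarrow> 'a" where
  "alg_g P t st \<xi> =
     (let y = alg_y P t st; sy = fst \<xi>
      in st_hb st + (1 / real (a_n P)) *\<^sub>R (\<Sum>i<a_n P. a_Cy P i (sy i) (a_grad P i y - st_h st i)))"

definition alg_u :: "('a::euclidean_space, 's) alg_params \<Rightarrow> nat \<Rightarrow> 'a alg_state \<Rightarrow> 's seed \<Rightarrow> 'a" where
  "alg_u P t st \<xi> =
     (let y = alg_y P t st; g = alg_g P t st \<xi>; A = a_Lbar P + Gam P t * a_mu P; ga = alg_gamma P t
      in arg_min (\<lambda>x. g \<bullet> x + A / (2 * ga) * (norm (x - st_u st))\<^sup>2 + a_mu P / 2 * (norm (x - y))\<^sup>2)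
                 (\<lambda>_. True))"

definition alg_q :: "('a::euclidean_space, 's) alg_params \<Rightarrow> nat \<Rightarrow> 'a alg_state \<Rightarrow> 'a" where
  "alg_q P t st =
     (let y = alg_y P t st; A = a_Lbar P + Gam P t * a_mu P; ga = alg_gamma P t
      in arg_min (\<lambda>x. st_k st \<bullet> x + A / (2 * ga) * (norm (x - st_w st))\<^sup>2 + a_mu P / 2 * (norm (x - y))\<^sup>2)
                 (\<lambda>_. True))"

definition alg_x :: "('a::euclidean_space, 's) alg_params \<Rightarrow> nat \<Rightarrow> 'a alg_state \<Rightarrow> 's seed \<Rightarrow> 'a" where
  "alg_x P t st \<xi> = alg_theta P t *\<^sub>R alg_u P t st \<xi> + (1 - alg_theta P t) *\<^sub>R st_z st"

definition alg_step :: "('a::euclidean_space, 's) alg_params \<Rightarrow> nat \<Rightarrow> 'a alg_state \<Rightarrow> 's seed \<Rightarrow> 'a alg_state" where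
  "alg_step P t st \<xi> =
     (case \<xi> of (sy, sz, sP, c) \<Rightarrow>
      let n = a_n P; \<beta> = alg_beta P; \<tau> = a_tau P;
          u' = alg_u P t st \<xi>;
          q' = alg_q P t st;
          w' = q' + a_CP P sP (u' - q');
          x' = alg_x P t st \<xi>;
          k' = (if c then st_v st else st_k st);
          z' = (if c then x' else st_z st);
          mz = (\<lambda>i. a_Cz P i (sz i) (a_grad P i z' - st_h st i))
      in \<lparr> st_w = w', st_z = z', st_u = u',
           st_h = (\<lambda>i. st_h st i + \<beta> *\<^sub>R mz i),
           st_hb = st_hb st + (\<beta> / real n) *\<^sub>R (\<Sum>i<n. mz i),
           st_k = k',
           st_v = (1 - \<tau>) *\<^sub>R st_v st + \<tau> *\<^sub>R (st_hb st + (1 / real n) *\<^sub>R (\<Sum>i<n. mz i)) \<rparr>)"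

definition alg_init :: "('a::euclidean_space, 's) alg_params \<Rightarrow> 'a alg_state" where
  "alg_init P = \<lparr> st_w = a_x0 P, st_z = a_x0 P, st_u = a_x0 P, st_h = a_h0 P,
     st_hb = (1 / real (a_n P)) *\<^sub>R (\<Sum>i<a_n P. a_h0 P i), st_k = a_k0 P, st_v = a_v0 P \<rparr>"

text \<open>State at time t, given the realised randomness hist 0, ..., hist (t-1) of the first t iterations.\<close>
primrec alg_run :: "('a::euclidean_space, 's) alg_params \<Rightarrow> nat \<Rightarrow> (nat \<Rightarrow> 's seed) \<Rightarrow> 'a alg_state" where
  "alg_run P 0 hist = alg_init P"
| "alg_run P (Suc t) hist = alg_step P t (alg_run P t hist) (hist t)"

end

theory Submission
  imports Defs
begin

lemma lower_fst:
  assumes "sigma_finite_measure N"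
  shows "(\<integral>\<^sup>+ z. F z \<partial>(M \<Otimes>\<^sub>M N)) \<le> (\<integral>\<^sup>+ x. (\<integral>\<^sup>+ y. F (x, y) \<partial>N) \<partial>M)"
  unfolding nn_integral_def[of "M \<Otimes>\<^sub>M N"]
proof (rule SUP_least, safe)
  fix g assume g: "simple_function (M \<Otimes>\<^sub>M N) g" "g \<le> F"
  have gm: "g \<in> borel_measurable (M \<Otimes>\<^sub>M N)" using g(1) by (rule borel_measurable_simple_function)
  have "integral\<^sup>S (M \<Otimes>\<^sub>M N) g = integral\<^sup>N (M \<Otimes>\<^sub>M N) g"
    using g(1) by (simp add: nn_integral_eq_simple_integral)
  also have "\<dots> = (\<integral>\<^sup>+ x. (\<integral>\<^sup>+ y. g (x, y) \<partial>N) \<partial>M)"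
    using sigma_finite_measure.nn_integral_fst[OF assms gm] by simp
  also have "\<dots> \<le> (\<integral>\<^sup>+ x. (\<integral>\<^sup>+ y. F (x, y) \<partial>N) \<partial>M)"
    using g(2) by (intro nn_integral_mono) (simp add: le_fun_def)
  finally show "integral\<^sup>S (M \<Otimes>\<^sub>M N) g \<le> (\<integral>\<^sup>+ x. (\<integral>\<^sup>+ y. F (x, y) \<partial>N) \<partial>M)" .
qed

lemma lower_fst_const:
  assumes "prob_space N"
  shows "(\<integral>\<^sup>+ x. h x \<partial>M) \<le> (\<integral>\<^sup>+ z. h (fst z) \<partial>(M \<Otimes>\<^sub>M N))"
  unfolding nn_integral_def[of M]
proof (rule SUP_least, safe)
  fix g assume g: "simple_function M g" "g \<le> h"
  have gm: "g \<in> borel_measurable M" using g(1) by (rule borel_measurable_simple_function)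
  interpret N: prob_space N by fact
  have "integral\<^sup>S M g = integral\<^sup>N M g"
    using g(1) by (simp add: nn_integral_eq_simple_integral)
  also have "\<dots> = (\<integral>\<^sup>+ x. (\<integral>\<^sup>+ y. g (fst (x, y)) \<partial>N) \<partial>M)"
    by (simp add: N.emeasure_space_1)
  also have "\<dots> = (\<integral>\<^sup>+ z. g (fst z) \<partial>(M \<Otimes>\<^sub>M N))"
    using gm by (intro N.nn_integral_fst) (auto intro: measurable_compose[OF measurable_fst])
  also have "\<dots> \<le> (\<integral>\<^sup>+ z. h (fst z) \<partial>(M \<Otimes>\<^sub>M N))"
    using g(2) by (intro nn_integral_mono) (simp add: le_fun_def)
  finally show "integral\<^sup>S M g \<le> (\<integral>\<^sup>+ z. h (fst z) \<partial>(M \<Otimes>\<^sub>M N))" .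
qed

lemma lower_affine:
  assumes "prob_space M" and c: "0 \<le> c"
  shows "(\<integral>\<^sup>+ x. a + ennreal c * h x \<partial>M) \<le> a + ennreal c * (\<integral>\<^sup>+ x. h x \<partial>M)"
  apply (subst nn_integral_def_finite[of M "\<lambda>x. a + ennreal c * h x"])
proof (rule SUP_least)
  interpret M: prob_space M by fact
  fix g assume "g \<in> {g. simple_function M g \<and> g \<le> (\<lambda>x. a + ennreal c * h x) \<and> (\<forall>x. g x < top)}"
  then have g: "simple_function M g" "g \<le> (\<lambda>x. a + ennreal c * h x)" "\<forall>x. g x < top" by auto
  have gm: "g \<in> borel_measurable M" using g(1) by (rule borel_measurable_simple_function)
  define g' where "g' = (\<lambda>x. (g x - a) * ennreal (1 / c))"
  have g'm: "g' \<in> borel_measurable M" unfolding g'_def using gm by measurable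
  show "integral\<^sup>S M g \<le> a + ennreal c * (\<integral>\<^sup>+ x. h x \<partial>M)"
  proof (cases "c = 0")
    case True
    have "integral\<^sup>S M g = integral\<^sup>N M g"
      using g(1) by (simp add: nn_integral_eq_simple_integral)
    also have "\<dots> \<le> integral\<^sup>N M (\<lambda>x. a)"
      using g(2) True by (intro nn_integral_mono) (simp add: le_fun_def)
    also have "\<dots> = a" by (simp add: M.emeasure_space_1)
    finally show ?thesis by (simp add: add_increasing2)
  next
    case False
    with c have cp: "0 < c" by simp
    have cc: "ennreal c * ennreal (1 / c) = 1"
      using cp by (simp add: ennreal_mult[symmetric])
    have le1: "g x \<le> a + ennreal c * g' x" for x
    proof -
      have "ennreal c * g' x = g x - a" unfolding g'_def
        by (metis cc mult.commute mult.left_neutral mult.assoc)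
      moreover have "g x \<le> a + (g x - a)"
        by (metis add_diff_inverse_ennreal le_iff_add nle_le order.refl add_increasing2 zero_le)
      ultimately show ?thesis by simp
    qed
    have le2: "g' x \<le> h x" for x
    proof -
      have "g x - a \<le> ennreal c * h x"
        using g(2) spec[OF g(3), of x] by (auto simp: le_fun_def ennreal_minus_le_iff)
      then have "(g x - a) * ennreal (1 / c) \<le> ennreal c * h x * ennreal (1 / c)"
        by (rule mult_right_mono) simp
      also have "\<dots> = h x" using cc by (metis mult.commute mult.left_commute mult_1_right)
      finally show ?thesis unfolding g'_def .
    qed
    have "integral\<^sup>S M g = integral\<^sup>N M g"
      using g(1) by (simp add: nn_integral_eq_simple_integral)
    also have "\<dots> \<le> integral\<^sup>N M (\<lambda>x. a + ennreal c * g' x)"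
      using le1 by (intro nn_integral_mono) simp
    also have "\<dots> = a + ennreal c * integral\<^sup>N M g'"
      using g'm by (simp add: nn_integral_add nn_integral_cmult M.emeasure_space_1)
    also have "\<dots> \<le> a + ennreal c * (\<integral>\<^sup>+ x. h x \<partial>M)"
      using le2 by (intro add_mono mult_left_mono nn_integral_mono) auto
    finally show ?thesis .
  qed
qed

lemma one_coord:
  fixes e :: "'s \<Rightarrow> 'a::euclidean_space"
  assumes S: "prob_space S" and em: "e \<in> borel_measurable S" and ei: "integrable S e"
    and e0: "(\<integral>s. e s \<partial>S) = 0"
    and fin: "(\<integral>\<^sup>+s. ennreal ((norm (e s))\<^sup>2) \<partial>S) < \<infinity>"
  shows "(\<integral>\<^sup>+s. ennreal ((norm (w + e s))\<^sup>2) \<partial>S) = ennreal ((norm w)\<^sup>2) + (\<integral>\<^sup>+s. ennreal ((norm (e s))\<^sup>2) \<partial>S)"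
proof -
  interpret prob_space S by fact
  have i2: "integrable S (\<lambda>s. (norm (e s))\<^sup>2)"
    using em fin by (intro integrableI_bounded) auto
  have eq: "(norm (w + e s))\<^sup>2 = (norm w)\<^sup>2 + 2 * (w \<bullet> e s) + (norm (e s))\<^sup>2" for s
    by (simp add: power2_norm_eq_inner inner_add_left inner_add_right inner_commute)
  have i3: "integrable S (\<lambda>s. (norm w)\<^sup>2 + 2 * (w \<bullet> e s) + (norm (e s))\<^sup>2)"
    using ei i2 by (intro Bochner_Integration.integrable_add integrable_mult_right integrable_inner_right) auto
  have "(\<integral>\<^sup>+s. ennreal ((norm (w + e s))\<^sup>2) \<partial>S) = ennreal (\<integral>s. (norm w)\<^sup>2 + 2 * (w \<bullet> e s) + (norm (e s))\<^sup>2 \<partial>S)"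
    unfolding eq using i3 by (intro nn_integral_eq_integral) (auto simp flip: eq)
  also have "(\<integral>s. (norm w)\<^sup>2 + 2 * (w \<bullet> e s) + (norm (e s))\<^sup>2 \<partial>S) = (norm w)\<^sup>2 + (\<integral>s. (norm (e s))\<^sup>2 \<partial>S)"
    using ei i2 e0 by (simp add: Bochner_Integration.integral_add integrable_mult_right prob_space)
  also have "ennreal \<dots> = ennreal ((norm w)\<^sup>2) + (\<integral>\<^sup>+s. ennreal ((norm (e s))\<^sup>2) \<partial>S)"
    using i2 by (simp add: nn_integral_eq_integral ennreal_plus)
  finally show ?thesis .
qed

lemma sum_indep:
  fixes e :: "nat \<Rightarrow> 's \<Rightarrow> 'a::euclidean_space"
  assumes M: "\<And>i. prob_space (M i)" and I: "finite I"
    and em: "\<And>i. i \<in> I \<Longrightarrow> e i \<in> borel_measurable (M i)"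
    and ei: "\<And>i. i \<in> I \<Longrightarrow> integrable (M i) (e i)"
    and e0: "\<And>i. i \<in> I \<Longrightarrow> (\<integral>s. e i s \<partial>M i) = 0"
    and fin: "\<And>i. i \<in> I \<Longrightarrow> (\<integral>\<^sup>+s. ennreal ((norm (e i s))\<^sup>2) \<partial>M i) < \<infinity>"
  shows "(\<integral>\<^sup>+x. ennreal ((norm (u + (\<Sum>i\<in>I. e i (x i))))\<^sup>2) \<partial>PiM I M)
     = ennreal ((norm u)\<^sup>2) + (\<Sum>i\<in>I. \<integral>\<^sup>+s. ennreal ((norm (e i s))\<^sup>2) \<partial>M i)"
  using I em ei e0 fin
proof (induction I rule: finite_induct)
  case empty
  interpret prob_space "PiM {} M" by (rule prob_space_PiM) (use M in auto)
  show ?case by (simp add: emeasure_space_1)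
next
  case (insert i I)
  interpret product_sigma_finite M
    unfolding product_sigma_finite_def using M by (auto intro: prob_space_imp_sigma_finite)
  have emI[measurable]: "\<And>j. j \<in> insert i I \<Longrightarrow> e j \<in> borel_measurable (M j)" by (rule insert.prems)
  have meas: "(\<lambda>x. ennreal ((norm (u + (\<Sum>j\<in>insert i I. e j (x j))))\<^sup>2)) \<in> borel_measurable (PiM (insert i I) M)"
    using emI by measurable
  have "(\<integral>\<^sup>+x. ennreal ((norm (u + (\<Sum>j\<in>insert i I. e j (x j))))\<^sup>2) \<partial>PiM (insert i I) M)
      = (\<integral>\<^sup>+x. (\<integral>\<^sup>+y. ennreal ((norm (u + (\<Sum>j\<in>insert i I. e j ((x(i:=y)) j))))\<^sup>2) \<partial>M i) \<partial>PiM I M)"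
    by (rule product_nn_integral_insert[OF insert.hyps(1,2) meas])
  also have "\<dots> = (\<integral>\<^sup>+x. ennreal ((norm (u + (\<Sum>j\<in>I. e j (x j))))\<^sup>2) + (\<integral>\<^sup>+s. ennreal ((norm (e i s))\<^sup>2) \<partial>M i) \<partial>PiM I M)"
  proof (rule nn_integral_cong)
    fix x
    have "(\<Sum>j\<in>insert i I. e j ((x(i:=y)) j)) = e i y + (\<Sum>j\<in>I. e j (x j))" for y
      using insert.hyps by (auto intro!: sum.cong)
    then show "(\<integral>\<^sup>+y. ennreal ((norm (u + (\<Sum>j\<in>insert i I. e j ((x(i:=y)) j))))\<^sup>2) \<partial>M i) =
        ennreal ((norm (u + (\<Sum>j\<in>I. e j (x j))))\<^sup>2) + (\<integral>\<^sup>+s. ennreal ((norm (e i s))\<^sup>2) \<partial>M i)"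
      using one_coord[OF M insert.prems(1-4)[of i], of "u + (\<Sum>j\<in>I. e j (x j))"]
      by (simp add: add.assoc add.commute add.left_commute)
  qed
  also have "\<dots> = (\<integral>\<^sup>+x. ennreal ((norm (u + (\<Sum>j\<in>I. e j (x j))))\<^sup>2) \<partial>PiM I M) + (\<integral>\<^sup>+s. ennreal ((norm (e i s))\<^sup>2) \<partial>M i)"
  proof -
    interpret P: prob_space "PiM I M" by (rule prob_space_PiM) (use M in auto)
    have m2: "(\<lambda>x. ennreal ((norm (u + (\<Sum>j\<in>I. e j (x j))))\<^sup>2)) \<in> borel_measurable (PiM I M)"
      using emI by measurable
    show ?thesis using m2 by (simp add: nn_integral_add P.emeasure_space_1)
  qed
  also have "\<dots> = ennreal ((norm u)\<^sup>2) + (\<Sum>j\<in>insert i I. \<integral>\<^sup>+s. ennreal ((norm (e j s))\<^sup>2) \<partial>M j)"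
    using insert by (simp add: add.assoc add.commute)
  finally show ?case .
qed

lemma line_deriv:
  fixes f :: "'a::euclidean_space \<Rightarrow> real"
  assumes "\<forall>x. (f has_derivative (\<lambda>h. g x \<bullet> h)) (at x)"
  shows "((\<lambda>s. f (x + s *\<^sub>R d)) has_real_derivative (g (x + s *\<^sub>R d) \<bullet> d)) (at s)"
proof -
  have l: "((\<lambda>s. x + s *\<^sub>R d) has_derivative (\<lambda>h. h *\<^sub>R d)) (at s)"
    by (auto intro!: derivative_eq_intros)
  have "((\<lambda>s. f (x + s *\<^sub>R d)) has_derivative (\<lambda>h. g (x + s *\<^sub>R d) \<bullet> (h *\<^sub>R d))) (at s)"
    using has_derivative_compose[OF l spec[OF assms, of "x + s *\<^sub>R d"]] by simp
  moreover have "(\<lambda>h. g (x + s *\<^sub>R d) \<bullet> (h *\<^sub>R d)) = (*) (g (x + s *\<^sub>R d) \<bullet> d)"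
    by (auto simp: mult.commute)
  ultimately show ?thesis by (simp add: has_field_derivative_def)
qed

lemma grad_ineq:
  fixes f :: "'a::euclidean_space \<Rightarrow> real"
  assumes cvx: "convex_on UNIV f" and der: "\<forall>x. (f has_derivative (\<lambda>h. g x \<bullet> h)) (at x)"
  shows "f x + g x \<bullet> (y - x) \<le> f y"
proof -
  define \<psi> where "\<psi> = (\<lambda>s::real. f (x + s *\<^sub>R (y - x)))"
  have c: "convex_on UNIV \<psi>"
  proof (rule convex_onI)
    fix t a b :: real assume "0 < t" "t < 1"
    have "x + ((1 - t) *\<^sub>R a + t *\<^sub>R b) *\<^sub>R (y - x) = (1 - t) *\<^sub>R (x + a *\<^sub>R (y - x)) + t *\<^sub>R (x + b *\<^sub>R (y - x))"
      by (simp add: algebra_simps)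
    then show "\<psi> ((1 - t) *\<^sub>R a + t *\<^sub>R b) \<le> (1 - t) * \<psi> a + t * \<psi> b"
      unfolding \<psi>_def using convex_onD[OF cvx, of t] \<open>0 < t\<close> \<open>t < 1\<close> by simp
  qed simp
  have d: "(\<psi> has_real_derivative (g x \<bullet> (y - x))) (at 0 within UNIV)"
    unfolding \<psi>_def using line_deriv[OF der, of x "y - x" 0] by simp
  have "\<psi> 1 - \<psi> 0 \<ge> (g x \<bullet> (y - x)) * (1 - 0)"
    by (rule convex_on_imp_above_tangent[OF c _ _ _ d]) auto
  then show ?thesis unfolding \<psi>_def by simp
qed

lemma descent:
  fixes f :: "'a::euclidean_space \<Rightarrow> real"
  assumes der: "\<forall>x. (f has_derivative (\<lambda>h. g x \<bullet> h)) (at x)"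
    and lip: "\<forall>x y. norm (g x - g y) \<le> L * norm (x - y)"
  shows "f (x + d) \<le> f x + g x \<bullet> d + L / 2 * (norm d)\<^sup>2"
proof -
  define chi where "chi = (\<lambda>s::real. f (x + s *\<^sub>R d) - s * (g x \<bullet> d) - L / 2 * s\<^sup>2 * (norm d)\<^sup>2)"
  have "chi 1 \<le> chi 0"
  proof (rule DERIV_nonpos_imp_nonincreasing[of 0 1])
    fix s :: real assume s: "0 \<le> s" "s \<le> 1"
    have "(chi has_real_derivative (g (x + s *\<^sub>R d) \<bullet> d - g x \<bullet> d - L / 2 * (2 * s) * (norm d)\<^sup>2)) (at s)"
      unfolding chi_def
      by (intro derivative_eq_intros) (auto simp: power2_eq_square intro: line_deriv[OF der])
    moreover have "g (x + s *\<^sub>R d) \<bullet> d - g x \<bullet> d - L / 2 * (2 * s) * (norm d)\<^sup>2 \<le> 0"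
    proof -
      have "g (x + s *\<^sub>R d) \<bullet> d - g x \<bullet> d = (g (x + s *\<^sub>R d) - g x) \<bullet> d" by (simp add: inner_diff_left)
      also have "\<dots> \<le> norm (g (x + s *\<^sub>R d) - g x) * norm d" by (rule norm_cauchy_schwarz)
      also have "\<dots> \<le> L * norm (s *\<^sub>R d) * norm d"
        using lip[rule_format, of "x + s *\<^sub>R d" x] by (intro mult_right_mono) auto
      also have "\<dots> = L * s * (norm d)\<^sup>2" using s by (simp add: power2_eq_square)
      finally show ?thesis by simp
    qed
    ultimately show "\<exists>y. (chi has_real_derivative y) (at s) \<and> y \<le> 0" by blast
  qed simp
  then show ?thesis unfolding chi_def by simp
qed

lemma cocoercive:
  fixes f :: "'a::euclidean_space \<Rightarrow> real"
  assumes cvx: "convex_on UNIV f" and sm: "lsmooth L f g"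
  shows "(norm (g x - g y))\<^sup>2 \<le> 2 * L * bregman f g x y"
proof -
  have der: "\<forall>x. (f has_derivative (\<lambda>h. g x \<bullet> h)) (at x)" and lip: "\<forall>x y. norm (g x - g y) \<le> L * norm (x - y)"
    using sm by (auto simp: lsmooth_def)
  have D0: "0 \<le> bregman f g x y"
    using grad_ineq[OF cvx der, of y x] by (simp add: bregman_def)
  show ?thesis
  proof (cases "L > 0")
    case False
    have "norm (g x - g y) \<le> L * norm (x - y)" using lip by blast
    also have "\<dots> \<le> 0" using False by (simp add: mult_nonpos_nonneg)
    finally have "g x = g y" by simp
    then have "(norm (g x - g y))\<^sup>2 = 0" by simp
    moreover have "x = y \<or> L = 0"
    proof (rule ccontr)
      assume "\<not> (x = y \<or> L = 0)"
      then have "L < 0" "norm (x - y) > 0" using False by auto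
      then have "L * norm (x - y) < 0" by (simp add: mult_neg_pos)
      with lip norm_ge_zero[of "g x - g y"] show False by (meson leD order.trans lip)
    qed
    ultimately show ?thesis by (auto simp: bregman_def)
  next
    case True
    define v where "v = g x - g y"
    define w where "w = x - (1 / L) *\<^sub>R v"
    have a: "f y + g y \<bullet> (w - y) \<le> f w" by (rule grad_ineq[OF cvx der])
    have b: "f w \<le> f x + g x \<bullet> (w - x) + L / 2 * (norm (w - x))\<^sup>2" using descent[OF der lip, of x "w - x"] by simp
    have wx: "w - x = - (1 / L) *\<^sub>R v" by (simp add: w_def)
    have wy: "w - y = (x - y) - (1 / L) *\<^sub>R v" by (simp add: w_def)
    have m1: "f y + g y \<bullet> (x - y) - (1 / L) * (g y \<bullet> v) \<le> f x - (1 / L) * (g x \<bullet> v) + L / 2 * ((1 / L)\<^sup>2 * (norm v)\<^sup>2)"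
    proof -
      have n: "(norm (w - x))\<^sup>2 = (1 / L)\<^sup>2 * (norm v)\<^sup>2" unfolding wx using True
        by (simp add: power_mult_distrib power_divide)
      have i1: "g y \<bullet> (w - y) = g y \<bullet> (x - y) - (1 / L) * (g y \<bullet> v)" unfolding wy by (simp add: inner_diff_right)
      have i2: "g x \<bullet> (w - x) = - (1 / L) * (g x \<bullet> v)" unfolding wx by simp
      show ?thesis using a b unfolding n i1 i2 by linarith
    qed
    have "g x \<bullet> v - g y \<bullet> v = (norm v)\<^sup>2" by (simp add: v_def power2_norm_eq_inner inner_diff_left)
    then have m2: "(1 / L) * (g x \<bullet> v) = (1 / L) * (g y \<bullet> v) + (1 / L) * (norm v)\<^sup>2"
      by (metis add_diff_cancel_left' diff_add_cancel distrib_left)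
    have "(1 / L) * (norm v)\<^sup>2 - L / 2 * ((1 / L)\<^sup>2 * (norm v)\<^sup>2) \<le> bregman f g x y"
      unfolding bregman_def using m1 m2 by linarith
    moreover have "(1 / L) * (norm v)\<^sup>2 - L / 2 * ((1 / L)\<^sup>2 * (norm v)\<^sup>2) = (norm v)\<^sup>2 / (2 * L)"
      using True by (simp add: field_simps power2_eq_square)
    ultimately have "(norm v)\<^sup>2 / (2 * L) \<le> bregman f g x y" by simp
    then show ?thesis using True by (simp add: v_def field_simps)
  qed
qed

lemma final_real:
  fixes p tau omega L Lmax Lhat D A Ax B H Hx d nr :: real
  assumes p: "0 < p" "p \<le> 1" and tau: "0 < tau" "tau \<le> 1" and om: "0 \<le> omega"
    and nr: "1 \<le> nr" and L: "0 \<le> L" and nn: "0 \<le> A" "0 \<le> B" "0 \<le> H" "0 \<le> D" "0 \<le> d" "0 \<le> Hx"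
    and hAx: "Ax \<le> (1 + tau / (2 * p)) * A + (1 + 2 * p / tau) * B"
    and hB: "B \<le> 4 * L * D + 2 * L\<^sup>2 * d"
    and hHx: "Hx \<le> 2 * H + 8 * Lmax * nr * D + 4 * nr * Lhat\<^sup>2 * d"
  shows "p * ((1 - tau)\<^sup>2 * Ax + tau\<^sup>2 * omega / nr\<^sup>2 * Hx) + (1 - p) * ((1 - tau)\<^sup>2 * A + tau\<^sup>2 * omega / nr\<^sup>2 * H)
     \<le> (1 - tau / 2) * A + 2 * tau\<^sup>2 * omega / nr\<^sup>2 * H
        + (4 * p * (1 + 2 * p / tau) * L + 8 * p * tau\<^sup>2 * omega * Lmax / nr) * D
        + (2 * p * (1 + 2 * p / tau) * L\<^sup>2 + 4 * p * tau\<^sup>2 * omega * Lhat\<^sup>2 / nr) * d"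
proof -
  have t2: "(1 - tau)\<^sup>2 \<le> 1" "0 \<le> (1 - tau)\<^sup>2" using tau by (auto simp: power2_eq_square mult_le_one)
  have c0: "0 \<le> p * (1 - tau)\<^sup>2" using p by simp
  have s1: "p * ((1 - tau)\<^sup>2 * Ax) \<le> p * (1 - tau)\<^sup>2 * ((1 + tau / (2 * p)) * A + (1 + 2 * p / tau) * B)"
    using mult_left_mono[OF hAx c0] by (simp add: mult.assoc)
  have e1: "p * (1 - tau)\<^sup>2 * ((1 + tau / (2 * p)) * A + (1 + 2 * p / tau) * B)
      = (1 - tau)\<^sup>2 * (p + tau / 2) * A + (1 - tau)\<^sup>2 * (p * (1 + 2 * p / tau) * B)"
    using p by (simp add: field_simps)
  have kA: "(1 - tau)\<^sup>2 * (p + tau / 2) * A + (1 - p) * ((1 - tau)\<^sup>2 * A) \<le> (1 - tau / 2) * A"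
  proof -
    have "(1 - tau)\<^sup>2 * (p + tau / 2) * A + (1 - p) * ((1 - tau)\<^sup>2 * A) = ((1 - tau)\<^sup>2 * (1 + tau / 2)) * A"
      by (simp add: algebra_simps)
    also have "(1 - tau)\<^sup>2 * (1 + tau / 2) \<le> 1 - tau / 2"
    proof -
      have "(1 - tau)\<^sup>2 * (1 + tau / 2) = 1 - tau / 2 - tau * (2 - tau\<^sup>2) / 2"
        by (simp add: power2_eq_square field_simps)
      moreover have "0 \<le> tau * (2 - tau\<^sup>2) / 2"
      proof -
        have "tau\<^sup>2 \<le> 1" using tau by (simp add: power_le_one)
        then show ?thesis using tau by simp
      qed
      ultimately show ?thesis by linarith
    qed
    then have "((1 - tau)\<^sup>2 * (1 + tau / 2)) * A \<le> (1 - tau / 2) * A" using nn(1) by (rule mult_right_mono)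
    finally show ?thesis .
  qed
  have cB: "0 \<le> p * (1 + 2 * p / tau)" using p tau by simp
  have kB: "(1 - tau)\<^sup>2 * (p * (1 + 2 * p / tau) * B) \<le> p * (1 + 2 * p / tau) * (4 * L * D + 2 * L\<^sup>2 * d)"
  proof -
    have "(1 - tau)\<^sup>2 * (p * (1 + 2 * p / tau) * B) \<le> 1 * (p * (1 + 2 * p / tau) * B)"
      using cB nn(2) t2 by (intro mult_right_mono) auto
    also have "\<dots> \<le> p * (1 + 2 * p / tau) * (4 * L * D + 2 * L\<^sup>2 * d)"
      using mult_left_mono[OF hB cB] by simp
    finally show ?thesis .
  qed
  have cH: "0 \<le> p * (tau\<^sup>2 * omega / nr\<^sup>2)" using p om by simp
  have kH: "p * (tau\<^sup>2 * omega / nr\<^sup>2 * Hx) \<le> p * (tau\<^sup>2 * omega / nr\<^sup>2) * (2 * H + 8 * Lmax * nr * D + 4 * nr * Lhat\<^sup>2 * d)"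
    using mult_left_mono[OF hHx cH] by (simp add: mult.assoc)
  have eH: "p * (tau\<^sup>2 * omega / nr\<^sup>2) * (2 * H + 8 * Lmax * nr * D + 4 * nr * Lhat\<^sup>2 * d)
     = 2 * p * (tau\<^sup>2 * omega / nr\<^sup>2) * H + 8 * p * tau\<^sup>2 * omega * Lmax / nr * D + 4 * p * tau\<^sup>2 * omega * Lhat\<^sup>2 / nr * d"
    using nr by (simp add: field_simps power2_eq_square)
  have kH2: "2 * p * (tau\<^sup>2 * omega / nr\<^sup>2) * H + (1 - p) * (tau\<^sup>2 * omega / nr\<^sup>2 * H) \<le> 2 * tau\<^sup>2 * omega / nr\<^sup>2 * H"
  proof -
    have "2 * p * (tau\<^sup>2 * omega / nr\<^sup>2) * H + (1 - p) * (tau\<^sup>2 * omega / nr\<^sup>2 * H) = (1 + p) * (tau\<^sup>2 * omega / nr\<^sup>2 * H)"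
    proof -
      have "\<And>c. 2 * p * c * H + (1 - p) * (c * H) = (1 + p) * (c * H)" by (simp add: algebra_simps)
      then show ?thesis .
    qed
    also have "\<dots> \<le> 2 * (tau\<^sup>2 * omega / nr\<^sup>2 * H)"
      using p om nn(3) by (intro mult_right_mono) auto
    finally show ?thesis by simp
  qed
  have eB: "p * (1 + 2 * p / tau) * (4 * L * D + 2 * L\<^sup>2 * d) = 4 * p * (1 + 2 * p / tau) * L * D + 2 * p * (1 + 2 * p / tau) * L\<^sup>2 * d"
    by (simp add: algebra_simps)
  show ?thesis using s1 e1 kA kB kH eH kH2 eB by (simp add: algebra_simps)
qed

lemma lsmooth_nonneg:
  fixes f :: "'a::euclidean_space \<Rightarrow> real"
  assumes "lsmooth L f g" shows "0 \<le> L"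
proof -
  obtain b :: 'a where b: "b \<in> Basis" using nonempty_Basis by blast
  have "norm (g b - g 0) \<le> L * norm (b - 0)" using assms unfolding lsmooth_def by blast
  then show ?thesis using b by (smt (verit) norm_Basis norm_ge_zero diff_zero mult_cancel_left1)
qed

lemma young:
  fixes a b :: "'a::real_inner"
  assumes s: "0 < s"
  shows "(norm (a + b))\<^sup>2 \<le> (1 + s) * (norm a)\<^sup>2 + (1 + 1 / s) * (norm b)\<^sup>2"
proof -
  have e: "(norm (a + b))\<^sup>2 = (norm a)\<^sup>2 + 2 * (a \<bullet> b) + (norm b)\<^sup>2"
    by (simp add: power2_norm_eq_inner inner_add_left inner_add_right inner_commute)
  have "a \<bullet> b \<le> norm a * norm b" by (rule norm_cauchy_schwarz)
  moreover have "2 * (norm a * norm b) \<le> s * (norm a)\<^sup>2 + (norm b)\<^sup>2 / s"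
  proof -
    have "0 \<le> (s * norm a - norm b)\<^sup>2 / s" using s by simp
    also have "(s * norm a - norm b)\<^sup>2 / s = s * (norm a)\<^sup>2 + (norm b)\<^sup>2 / s - 2 * (norm a * norm b)"
      using s by (simp add: field_simps power2_eq_square)
    finally show ?thesis by simp
  qed
  ultimately show ?thesis unfolding e by (simp add: algebra_simps)
qed

lemma sq2:
  fixes a b :: "'a::real_inner"
  shows "(norm (a + b))\<^sup>2 \<le> 2 * (norm a)\<^sup>2 + 2 * (norm b)\<^sup>2"
  using young[of 1 a b] by simp

lemma hb_inv:
  "st_hb (alg_run P t hist) = (1 / real (a_n P)) *\<^sub>R (\<Sum>i<a_n P. st_h (alg_run P t hist) i)"
proof (induction t)
  case 0
  then show ?case by (simp add: alg_init_def)
next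
  case (Suc t)
  obtain sy sz sP c where h: "hist t = (sy, sz, sP, c)" by (cases "hist t") auto
  show ?case using Suc
    by (simp add: h alg_step_def Let_def scaleR_sum_right sum.distrib algebra_simps)
qed

theorem lemma10:
  fixes n :: nat
    and fi :: "nat \<Rightarrow> 'a::euclidean_space \<Rightarrow> real" and gf :: "nat \<Rightarrow> 'a \<Rightarrow> 'a"
    and Li :: "nat \<Rightarrow> real" and Lhat L :: real
    and Lbar mu p Gamma0 tau omega alpha :: real
    and x0 k0 v0 :: 'a and h0 :: "nat \<Rightarrow> 'a"
    and Cy Cz :: "nat \<Rightarrow> 's \<Rightarrow> 'a \<Rightarrow> 'a" and CP :: "'s \<Rightarrow> 'a \<Rightarrow> 'a"
    and Sy Sz :: "nat \<Rightarrow> 's measure" and SP :: "'s measure"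
    and t :: nat and hist :: "nat \<Rightarrow> 's seed"
  assumes n_pos: "1 \<le> n"
    and A1_smooth: "\<forall>i<n. lsmooth (Li i) (fi i) (gf i)"
    and A1_Lhat_pos: "0 < Lhat"
    and A1_Lhat: "\<forall>x y. (1 / real n) * (\<Sum>i<n. (norm (gf i x - gf i y))\<^sup>2) \<le> Lhat\<^sup>2 * (norm (x - y))\<^sup>2"
    and A2: "lsmooth L (\<lambda>x. (1 / real n) * (\<Sum>i<n. fi i x)) (\<lambda>x. (1 / real n) *\<^sub>R (\<Sum>i<n. gf i x))"
    and A3_convex: "\<forall>i<n. convex_on UNIV (fi i)"
    and A3_mu: "0 \<le> mu"
    and A3_strong: "strongly_convex mu (\<lambda>x. (1 / real n) * (\<Sum>i<n. fi i x))"
    and A3_min: "\<exists>xs. \<forall>x. (1 / real n) * (\<Sum>i<n. fi i xs) \<le> (1 / real n) * (\<Sum>i<n. fi i x)"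
    and Cy_class: "\<forall>i<n. unbiased_compressor omega (Sy i) (Cy i)"
    and Cz_class: "\<forall>i<n. unbiased_compressor omega (Sz i) (Cz i)"
    and CP_class: "contractive_compressor alpha SP CP"
    and Lbar_pos: "0 < Lbar"
    and p_pos: "0 < p" and p_le: "p \<le> 1"
    and Gamma0_ge: "1 \<le> Gamma0"
    and tau_pos: "0 < tau" and tau_le: "tau \<le> 1"
  defines "P \<equiv> \<lparr> a_n = n, a_grad = gf, a_Lbar = Lbar, a_mu = mu, a_p = p, a_Gamma0 = Gamma0,
                  a_tau = tau, a_omega = omega, a_alpha = alpha, a_x0 = x0, a_h0 = h0, a_k0 = k0,
                  a_v0 = v0, a_Cy = Cy, a_Cz = Cz, a_CP = CP \<rparr>"
  shows
    "(let f = (\<lambda>x. (1 / real n) * (\<Sum>i<n. fi i x));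
          gradf = (\<lambda>x. (1 / real n) *\<^sub>R (\<Sum>i<n. gf i x));
          Lmax = Max (Li ` {..<n});
          \<Xi> = seed_measure n Sy Sz SP p;
          st = alg_run P t hist;
          y' = alg_y P t st
      in (\<integral>\<^sup>+ \<xi>. ennreal ((norm (st_v (alg_step P t st \<xi>) - gradf (st_z (alg_step P t st \<xi>))))\<^sup>2) \<partial>\<Xi>)
         \<le> ennreal ((1 - tau / 2) * (norm (st_v st - gradf (st_z st)))\<^sup>2
                    + 2 * tau\<^sup>2 * omega / (real n)\<^sup>2 * (\<Sum>i<n. (norm (st_h st i - gf i (st_z st)))\<^sup>2)
                    + (4 * p * (1 + 2 * p / tau) * L + 8 * p * tau\<^sup>2 * omega * Lmax / real n)
                        * bregman f gradf (st_z st) y')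
           + ennreal (2 * p * (1 + 2 * p / tau) * L\<^sup>2 + 4 * p * tau\<^sup>2 * omega * Lhat\<^sup>2 / real n)
             * (\<integral>\<^sup>+ \<xi>. ennreal ((norm (alg_x P t st \<xi> - y'))\<^sup>2) \<partial>\<Xi>))"
  proof -
  define f where "f = (\<lambda>x. (1 / real n) * (\<Sum>i<n. fi i x))"
  define gradf where "gradf = (\<lambda>x. (1 / real n) *\<^sub>R (\<Sum>i<n. gf i x))"
  define Lmax where "Lmax = Max (Li ` {..<n})"
  define st where "st = alg_run P t hist"
  define y' where "y' = alg_y P t st"
  define v where "v = st_v st"
  define z where "z = st_z st"
  define h where "h = st_h st"
  define hb where "hb = st_hb st"
  define Xf where "Xf = (\<lambda>sy. alg_x P t st (sy, undefined))"
  define D where "D = bregman f gradf z y'"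
  define K where "K = (1 - tau / 2) * (norm (v - gradf z))\<^sup>2
                    + 2 * tau\<^sup>2 * omega / (real n)\<^sup>2 * (\<Sum>i<n. (norm (h i - gf i z))\<^sup>2)
                    + (4 * p * (1 + 2 * p / tau) * L + 8 * p * tau\<^sup>2 * omega * Lmax / real n) * D"
  define c2 where "c2 = 2 * p * (1 + 2 * p / tau) * L\<^sup>2 + 4 * p * tau\<^sup>2 * omega * Lhat\<^sup>2 / real n"
  define Bern where "Bern = measure_pmf (bernoulli_pmf p)"
  define R where "R = PiM {..<n} Sz \<Otimes>\<^sub>M (SP \<Otimes>\<^sub>M Bern)"
  define phi where "phi = (\<lambda>z' sz. (norm ((1 - tau) *\<^sub>R v + tau *\<^sub>R (hb + (1 / real n) *\<^sub>R (\<Sum>i<n. Cz i (sz i) (gf i z' - h i))) - gradf z'))\<^sup>2)"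
  define E where "E = (\<lambda>z'. (1 - tau)\<^sup>2 * (norm (v - gradf z'))\<^sup>2 + tau\<^sup>2 * omega / (real n)\<^sup>2 * (\<Sum>i<n. (norm (gf i z' - h i))\<^sup>2))"
  define G where "G = (\<lambda>\<xi>. ennreal ((norm (st_v (alg_step P t st \<xi>) - gradf (st_z (alg_step P t st \<xi>))))\<^sup>2))"

  have Ps[simp]: "a_n P = n" "a_grad P = gf" "a_tau P = tau" "a_Cz P = Cz" "a_omega P = omega"
    by (simp_all add: P_def)
  have nr: "1 \<le> real n" using n_pos by simp
  have om: "0 \<le> omega" using Cz_class n_pos by (auto simp: unbiased_compressor_def)
  have hb_eq: "hb = (1 / real n) *\<^sub>R (\<Sum>i<n. h i)"
    unfolding hb_def h_def st_def using hb_inv[of P t hist] by simp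
  have xf: "alg_x P t st \<xi> = Xf (fst \<xi>)" for \<xi>
    unfolding Xf_def by (cases \<xi>) (simp add: alg_x_def alg_u_def alg_g_def Let_def)
  have Gform: "G (sy, sz, sP, c) = ennreal (phi (if c then Xf sy else z) sz)" for sy sz sP c
    unfolding G_def phi_def
    by (simp add: alg_step_def Let_def xf v_def hb_def z_def h_def)

  have Szp: "prob_space (Sz i)" if "i < n" for i using Cz_class that by (auto simp: unbiased_compressor_def)
  have Syp: "prob_space (Sy i)" if "i < n" for i using Cy_class that by (auto simp: unbiased_compressor_def)
  have Czm: "(\<lambda>s. Cz i s a) \<in> borel_measurable (Sz i)" if "i < n" for i a
  proof -
    have j: "(\<lambda>(s, x). Cz i s x) \<in> borel_measurable (Sz i \<Otimes>\<^sub>M borel)"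
      using Cz_class that by (auto simp: unbiased_compressor_def)
    have "(\<lambda>s. (s, a)) \<in> Sz i \<rightarrow>\<^sub>M Sz i \<Otimes>\<^sub>M borel" by measurable
    from measurable_compose[OF this j] show ?thesis by simp
  qed
  have Czi: "integrable (Sz i) (\<lambda>s. Cz i s a)" "(\<integral>s. Cz i s a \<partial>Sz i) = a"
     "(\<integral>\<^sup>+ s. ennreal ((norm (Cz i s a - a))\<^sup>2) \<partial>Sz i) \<le> ennreal (omega * (norm a)\<^sup>2)"
    if "i < n" for i a using Cz_class that by (auto simp: unbiased_compressor_def)
  have phim: "(\<lambda>sz. ennreal (phi z' sz)) \<in> borel_measurable (PiM {..<n} Sz)" for z'
  proof -
    have "(\<lambda>sz. Cz i (sz i) (gf i z' - h i)) \<in> borel_measurable (PiM {..<n} Sz)" if "i \<in> {..<n}" for i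
      using measurable_compose[OF measurable_component_singleton[OF that, where M=Sz] Czm[of i "gf i z' - h i"]] that by simp
    then have "(\<lambda>sz. \<Sum>i<n. Cz i (sz i) (gf i z' - h i)) \<in> borel_measurable (PiM {..<n} Sz)"
      by (rule borel_measurable_sum)
    then show ?thesis unfolding phi_def by measurable
  qed
  have E1: "(\<integral>\<^sup>+sz. ennreal (phi z' sz) \<partial>PiM {..<n} Sz) \<le> ennreal (E z')" for z'
  proof -
    define M' where "M' = (\<lambda>i. if i < n then Sz i else measure_pmf (return_pmf undefined))"
    have M'p: "prob_space (M' i)" for i unfolding M'_def using Szp by (auto intro: prob_space_measure_pmf)
    have PiEq: "PiM {..<n} Sz = PiM {..<n} M'" by (rule PiM_cong) (auto simp: M'_def)
    define a where "a = (\<lambda>i. gf i z' - h i)"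
    define e where "e = (\<lambda>i s. (tau / real n) *\<^sub>R (Cz i s (a i) - a i))"
    define u where "u = (1 - tau) *\<^sub>R (v - gradf z')"
    have ident: "phi z' sz = (norm (u + (\<Sum>i<n. e i (sz i))))\<^sup>2" for sz
    proof -
      have se: "(\<Sum>i<n. e i (sz i)) = (tau / real n) *\<^sub>R ((\<Sum>i<n. Cz i (sz i) (a i)) - (\<Sum>i<n. gf i z') + (\<Sum>i<n. h i))"
        by (simp add: e_def a_def scaleR_sum_right[symmetric] sum_subtractf sum.distrib algebra_simps)
      have sg: "(tau / real n) *\<^sub>R w + ((1 - tau) / real n) *\<^sub>R w = (1 / real n) *\<^sub>R w" for w :: 'a
        by (simp add: scaleR_left_distrib[symmetric] add_divide_distrib[symmetric])
      show ?thesis unfolding phi_def se u_def hb_eq gradf_def a_def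
        by (simp add: algebra_simps sg)
    qed
    have em: "e i \<in> borel_measurable (M' i)" if "i \<in> {..<n}" for i
      using Czm[of i "a i"] that unfolding e_def M'_def by simp
    have ei: "integrable (M' i) (e i)" if "i \<in> {..<n}" for i
    proof -
      interpret prob_space "Sz i" using Szp that by simp
      show ?thesis using Czi(1)[of i "a i"] that unfolding e_def M'_def by simp
    qed
    have e0: "(\<integral>s. e i s \<partial>M' i) = 0" if "i \<in> {..<n}" for i
    proof -
      interpret prob_space "Sz i" using Szp that by simp
      show ?thesis using Czi(1,2)[of i "a i"] that unfolding e_def M'_def
        by (simp add: Bochner_Integration.integral_diff prob_space)
    qed
    have ebound: "(\<integral>\<^sup>+s. ennreal ((norm (e i s))\<^sup>2) \<partial>M' i) \<le> ennreal ((tau / real n)\<^sup>2 * (omega * (norm (a i))\<^sup>2))"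
      if "i \<in> {..<n}" for i
    proof -
      have nm: "(\<lambda>s. ennreal ((norm (Cz i s (a i) - a i))\<^sup>2)) \<in> borel_measurable (Sz i)"
      proof -
        have c[measurable]: "(\<lambda>s. Cz i s (a i)) \<in> borel_measurable (Sz i)" using Czm that by simp
        show ?thesis by measurable
      qed
      have "(\<integral>\<^sup>+s. ennreal ((norm (e i s))\<^sup>2) \<partial>M' i) = (\<integral>\<^sup>+s. ennreal ((tau / real n)\<^sup>2) * ennreal ((norm (Cz i s (a i) - a i))\<^sup>2) \<partial>Sz i)"
        using that tau_pos unfolding e_def M'_def
        by (simp add: power_mult_distrib ennreal_mult[symmetric] power_divide)
      also have "\<dots> = ennreal ((tau / real n)\<^sup>2) * (\<integral>\<^sup>+s. ennreal ((norm (Cz i s (a i) - a i))\<^sup>2) \<partial>Sz i)"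
        using nm by (rule nn_integral_cmult)
      also have "\<dots> \<le> ennreal ((tau / real n)\<^sup>2) * ennreal (omega * (norm (a i))\<^sup>2)"
        using Czi(3)[of i "a i"] that by (intro mult_left_mono) auto
      also have "\<dots> = ennreal ((tau / real n)\<^sup>2 * (omega * (norm (a i))\<^sup>2))"
        using om by (simp add: ennreal_mult)
      finally show ?thesis .
    qed
    have fin: "(\<integral>\<^sup>+s. ennreal ((norm (e i s))\<^sup>2) \<partial>M' i) < \<infinity>" if "i \<in> {..<n}" for i
      using ebound[OF that] by (simp add: le_less_trans)
    have "(\<integral>\<^sup>+sz. ennreal (phi z' sz) \<partial>PiM {..<n} Sz) = (\<integral>\<^sup>+x. ennreal ((norm (u + (\<Sum>i<n. e i (x i))))\<^sup>2) \<partial>PiM {..<n} M')"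
      unfolding PiEq ident ..
    also have "\<dots> = ennreal ((norm u)\<^sup>2) + (\<Sum>i<n. \<integral>\<^sup>+s. ennreal ((norm (e i s))\<^sup>2) \<partial>M' i)"
      by (rule sum_indep[OF M'p _ em ei e0 fin]) auto
    also have "\<dots> \<le> ennreal ((norm u)\<^sup>2) + (\<Sum>i<n. ennreal ((tau / real n)\<^sup>2 * (omega * (norm (a i))\<^sup>2)))"
      using ebound by (intro add_left_mono sum_mono) auto
    also have "\<dots> = ennreal ((norm u)\<^sup>2 + (\<Sum>i<n. (tau / real n)\<^sup>2 * (omega * (norm (a i))\<^sup>2)))"
      using om by (simp add: sum_ennreal ennreal_plus sum_nonneg)
    also have "(norm u)\<^sup>2 + (\<Sum>i<n. (tau / real n)\<^sup>2 * (omega * (norm (a i))\<^sup>2)) = E z'"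
    proof -
      have "(\<Sum>i<n. (tau / real n)\<^sup>2 * (omega * (norm (gf i z' - h i))\<^sup>2)) = (tau / real n)\<^sup>2 * (omega * (\<Sum>i<n. (norm (gf i z' - h i))\<^sup>2))"
        by (simp add: sum_distrib_left)
      then show ?thesis unfolding E_def u_def a_def using tau_le by (simp add: power_mult_distrib power_divide)
    qed
    finally show ?thesis .
  qed

  have SPp: "prob_space SP" using CP_class by (simp add: contractive_compressor_def)
  have Bp: "prob_space Bern" unfolding Bern_def by (rule prob_space_measure_pmf)
  have PSz: "prob_space (PiM {..<n} Sz)" by (rule prob_space_PiM) (use Szp in auto)
  have PSy: "prob_space (PiM {..<n} Sy)" by (rule prob_space_PiM) (use Syp in auto)
  have SPBp: "prob_space (SP \<Otimes>\<^sub>M Bern)" using SPp Bp by (rule prob_space_pair)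
  have Rp: "prob_space R" unfolding R_def using PSz SPBp by (rule prob_space_pair)
  have inner: "(\<integral>\<^sup>+r. G (sy, r) \<partial>R) \<le> ennreal (p * E (Xf sy) + (1 - p) * E z)" for sy
  proof -
    have "(\<integral>\<^sup>+r. G (sy, r) \<partial>R) \<le> (\<integral>\<^sup>+sz. (\<integral>\<^sup>+w. G (sy, sz, w) \<partial>(SP \<Otimes>\<^sub>M Bern)) \<partial>PiM {..<n} Sz)"
      unfolding R_def by (rule lower_fst) (use SPBp in \<open>auto intro: prob_space_imp_sigma_finite\<close>)
    also have "\<dots> \<le> (\<integral>\<^sup>+sz. ennreal (phi (Xf sy) sz) * ennreal p + ennreal (phi z sz) * ennreal (1 - p) \<partial>PiM {..<n} Sz)"
    proof (rule nn_integral_mono)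
      fix sz
      have "(\<integral>\<^sup>+w. G (sy, sz, w) \<partial>(SP \<Otimes>\<^sub>M Bern)) \<le> (\<integral>\<^sup>+sP. (\<integral>\<^sup>+c. G (sy, sz, sP, c) \<partial>Bern) \<partial>SP)"
        by (rule lower_fst) (use Bp in \<open>auto intro: prob_space_imp_sigma_finite\<close>)
      also have "\<dots> = (\<integral>\<^sup>+sP. ennreal (phi (Xf sy) sz) * ennreal p + ennreal (phi z sz) * ennreal (1 - p) \<partial>SP)"
        unfolding Gform Bern_def using p_pos p_le by (subst nn_integral_bernoulli_pmf) auto
      also have "\<dots> = ennreal (phi (Xf sy) sz) * ennreal p + ennreal (phi z sz) * ennreal (1 - p)"
        using SPp by (simp add: prob_space.emeasure_space_1)
      finally show "(\<integral>\<^sup>+w. G (sy, sz, w) \<partial>(SP \<Otimes>\<^sub>M Bern)) \<le> ennreal (phi (Xf sy) sz) * ennreal p + ennreal (phi z sz) * ennreal (1 - p)" .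
    qed
    also have "\<dots> = (\<integral>\<^sup>+sz. ennreal (phi (Xf sy) sz) \<partial>PiM {..<n} Sz) * ennreal p + (\<integral>\<^sup>+sz. ennreal (phi z sz) \<partial>PiM {..<n} Sz) * ennreal (1 - p)"
    proof -
      have m1: "(\<lambda>sz. ennreal (phi z' sz) * ennreal c) \<in> borel_measurable (PiM {..<n} Sz)" for z' c
        using phim[of z'] by (intro borel_measurable_times_ennreal) auto
      show ?thesis
        by (subst nn_integral_add[OF m1 m1]) (simp add: nn_integral_multc[OF phim])
    qed
    also have "\<dots> \<le> ennreal (E (Xf sy)) * ennreal p + ennreal (E z) * ennreal (1 - p)"
      using E1 by (intro add_mono mult_right_mono) auto
    also have "\<dots> = ennreal (p * E (Xf sy) + (1 - p) * E z)"
    proof -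
      have "0 \<le> E z'" for z' unfolding E_def using om by (intro add_nonneg_nonneg mult_nonneg_nonneg sum_nonneg) auto
      then have "ennreal (p * E (Xf sy) + (1 - p) * E z) = ennreal (p * E (Xf sy)) + ennreal ((1 - p) * E z)"
        using p_pos p_le by (intro ennreal_plus) auto
      also have "\<dots> = ennreal (E (Xf sy)) * ennreal p + ennreal (E z) * ennreal (1 - p)"
        using p_pos p_le \<open>\<And>z'. 0 \<le> E z'\<close> by (simp add: ennreal_mult'' mult.commute)
      finally show ?thesis by simp
    qed
    finally show ?thesis .
  qed

  have A2': "lsmooth L f gradf" using A2 unfolding f_def gradf_def .
  have L0: "0 \<le> L" by (rule lsmooth_nonneg[OF A2'])
  have lipf: "norm (gradf a - gradf b) \<le> L * norm (a - b)" for a b using A2' unfolding lsmooth_def by blast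
  have derf: "\<forall>x. (f has_derivative (\<lambda>h. gradf x \<bullet> h)) (at x)" using A2' unfolding lsmooth_def by blast
  have A3': "\<forall>x y t. 0 \<le> t \<longrightarrow> t \<le> 1 \<longrightarrow> f (t *\<^sub>R x + (1 - t) *\<^sub>R y) \<le> t * f x + (1 - t) * f y - mu / 2 * t * (1 - t) * (norm (x - y))\<^sup>2"
    using A3_strong unfolding strongly_convex_def f_def by blast
  have fconv: "convex_on UNIV f"
  proof (rule convex_onI)
    fix x y :: 'a and tt :: real assume t: "0 < tt" "tt < 1"
    have "f ((1 - tt) *\<^sub>R x + (1 - (1 - tt)) *\<^sub>R y) \<le> (1 - tt) * f x + (1 - (1 - tt)) * f y - mu / 2 * (1 - tt) * (1 - (1 - tt)) * (norm (x - y))\<^sup>2"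
      using A3'[rule_format, of "1 - tt" x y] t by simp
    moreover have "0 \<le> mu / 2 * (1 - tt) * (1 - (1 - tt)) * (norm (x - y))\<^sup>2" using A3_mu t by simp
    ultimately show "f ((1 - tt) *\<^sub>R x + tt *\<^sub>R y) \<le> (1 - tt) * f x + tt * f y" by simp
  qed simp
  have sm_i: "lsmooth (Li i) (fi i) (gf i)" if "i < n" for i using A1_smooth that by blast
  have cv_i: "convex_on UNIV (fi i)" if "i < n" for i using A3_convex that by blast
  have D_i0: "0 \<le> bregman (fi i) (gf i) z y'" if "i < n" for i
    using grad_ineq[OF cv_i[OF that], of "gf i" y' z] sm_i[OF that] by (simp add: lsmooth_def bregman_def)
  have Dsum: "(\<Sum>i<n. bregman (fi i) (gf i) z y') = real n * D"
  proof -
    have s1: "(\<Sum>i<n. bregman (fi i) (gf i) z y') = (\<Sum>i<n. fi i z) - (\<Sum>i<n. fi i y') - (\<Sum>i<n. gf i y' \<bullet> (z - y'))"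
      by (simp add: bregman_def sum_subtractf)
    have s2: "D = (1 / real n) * ((\<Sum>i<n. fi i z) - (\<Sum>i<n. fi i y') - (\<Sum>i<n. gf i y' \<bullet> (z - y')))"
      unfolding D_def bregman_def f_def gradf_def by (simp add: inner_sum_left right_diff_distrib)
    show ?thesis unfolding s1 s2 using nr by simp
  qed
  have D0: "0 \<le> D"
  proof -
    have "0 \<le> (\<Sum>i<n. bregman (fi i) (gf i) z y')" by (rule sum_nonneg) (use D_i0 in auto)
    then have "0 \<le> real n * D" using Dsum by simp
    then show ?thesis using nr by (simp add: zero_le_mult_iff)
  qed
  have n0: "0 \<in> {..<n}" using n_pos by simp
  have finLi: "finite (Li ` {..<n})" "Li ` {..<n} \<noteq> {}" using n0 by auto
  have LiLmax: "Li i \<le> Lmax" if "i < n" for i unfolding Lmax_def using finLi that by (intro Max_ge) auto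
  have Lmax0: "0 \<le> Lmax" using LiLmax[of 0] lsmooth_nonneg[OF sm_i[of 0]] n_pos by simp
  have realb: "p * E x + (1 - p) * E z \<le> K + c2 * (norm (x - y'))\<^sup>2" for x
  proof -
    have hAx: "(norm (v - gradf x))\<^sup>2 \<le> (1 + tau / (2 * p)) * (norm (v - gradf z))\<^sup>2 + (1 + 2 * p / tau) * (norm (gradf z - gradf x))\<^sup>2"
      using young[of "tau / (2 * p)" "v - gradf z" "gradf z - gradf x"] tau_pos p_pos by simp
    have hB: "(norm (gradf z - gradf x))\<^sup>2 \<le> 4 * L * D + 2 * L\<^sup>2 * (norm (x - y'))\<^sup>2"
    proof -
      have "(norm (gradf z - gradf x))\<^sup>2 \<le> 2 * (norm (gradf z - gradf y'))\<^sup>2 + 2 * (norm (gradf y' - gradf x))\<^sup>2"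
        using sq2[of "gradf z - gradf y'" "gradf y' - gradf x"] by simp
      moreover have "(norm (gradf z - gradf y'))\<^sup>2 \<le> 2 * L * D" unfolding D_def by (rule cocoercive[OF fconv A2'])
      moreover have "(norm (gradf y' - gradf x))\<^sup>2 \<le> L\<^sup>2 * (norm (x - y'))\<^sup>2"
      proof -
        have "norm (gradf y' - gradf x) \<le> L * norm (x - y')" using lipf[of y' x] by (simp add: norm_minus_commute)
        then have "(norm (gradf y' - gradf x))\<^sup>2 \<le> (L * norm (x - y'))\<^sup>2" by (intro power_mono) auto
        then show ?thesis by (simp add: power_mult_distrib)
      qed
      ultimately show ?thesis by simp
    qed
    have hHx: "(\<Sum>i<n. (norm (gf i x - h i))\<^sup>2) \<le> 2 * (\<Sum>i<n. (norm (gf i z - h i))\<^sup>2) + 8 * Lmax * real n * D + 4 * real n * Lhat\<^sup>2 * (norm (x - y'))\<^sup>2"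
    proof -
      have pt: "(norm (gf i x - h i))\<^sup>2 \<le> 2 * (norm (gf i z - h i))\<^sup>2 + 8 * Lmax * bregman (fi i) (gf i) z y' + 4 * (norm (gf i x - gf i y'))\<^sup>2"
        if i: "i < n" for i
      proof -
        have a1: "(norm (gf i x - h i))\<^sup>2 \<le> 2 * (norm (gf i z - h i))\<^sup>2 + 2 * (norm (gf i x - gf i z))\<^sup>2"
          using sq2[of "gf i z - h i" "gf i x - gf i z"] by simp
        have a2: "(norm (gf i x - gf i z))\<^sup>2 \<le> 2 * (norm (gf i z - gf i y'))\<^sup>2 + 2 * (norm (gf i x - gf i y'))\<^sup>2"
          using sq2[of "gf i y' - gf i z" "gf i x - gf i y'"] by (simp add: norm_minus_commute)
        have a3: "(norm (gf i z - gf i y'))\<^sup>2 \<le> 2 * Li i * bregman (fi i) (gf i) z y'"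
          by (rule cocoercive[OF cv_i[OF i] sm_i[OF i]])
        have a4: "Li i * bregman (fi i) (gf i) z y' \<le> Lmax * bregman (fi i) (gf i) z y'"
          using LiLmax[OF i] D_i0[OF i] by (rule mult_right_mono)
        show ?thesis using a1 a2 a3 a4 by linarith
      qed
      have "(\<Sum>i<n. (norm (gf i x - h i))\<^sup>2) \<le> (\<Sum>i<n. 2 * (norm (gf i z - h i))\<^sup>2 + 8 * Lmax * bregman (fi i) (gf i) z y' + 4 * (norm (gf i x - gf i y'))\<^sup>2)"
        using pt by (intro sum_mono) auto
      also have "\<dots> = 2 * (\<Sum>i<n. (norm (gf i z - h i))\<^sup>2) + 8 * Lmax * (\<Sum>i<n. bregman (fi i) (gf i) z y') + 4 * (\<Sum>i<n. (norm (gf i x - gf i y'))\<^sup>2)"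
        by (simp add: sum.distrib sum_distrib_left)
      also have "(\<Sum>i<n. (norm (gf i x - gf i y'))\<^sup>2) \<le> real n * Lhat\<^sup>2 * (norm (x - y'))\<^sup>2"
      proof -
        have "(1 / real n) * (\<Sum>i<n. (norm (gf i x - gf i y'))\<^sup>2) \<le> Lhat\<^sup>2 * (norm (x - y'))\<^sup>2" using A1_Lhat by blast
        then show ?thesis using nr by (simp add: field_simps)
      qed
      finally show ?thesis unfolding Dsum by (simp add: algebra_simps)
    qed
    have Heq: "(\<Sum>i<n. (norm (h i - gf i z))\<^sup>2) = (\<Sum>i<n. (norm (gf i z - h i))\<^sup>2)" by (simp add: norm_minus_commute)
    show ?thesis
      unfolding E_def K_def c2_def Heq
      by (rule final_real[OF p_pos p_le tau_pos tau_le om nr L0 zero_le_power2 zero_le_power2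
            sum_nonneg[OF zero_le_power2] D0 zero_le_power2 sum_nonneg[OF zero_le_power2] hAx hB hHx])
  qed

  have K0: "0 \<le> K"
    unfolding K_def using tau_le om p_pos tau_pos L0 Lmax0 D0
    by (intro add_nonneg_nonneg mult_nonneg_nonneg sum_nonneg) auto
  have c20: "0 \<le> c2" unfolding c2_def using om p_pos tau_pos by simp
  have Xi_eq: "seed_measure n Sy Sz SP p = PiM {..<n} Sy \<Otimes>\<^sub>M R"
    unfolding seed_measure_def R_def Bern_def ..
  have final: "(\<integral>\<^sup>+\<xi>. G \<xi> \<partial>seed_measure n Sy Sz SP p)
      \<le> ennreal K + ennreal c2 * (\<integral>\<^sup>+\<xi>. ennreal ((norm (alg_x P t st \<xi> - y'))\<^sup>2) \<partial>seed_measure n Sy Sz SP p)"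
  proof -
    have "(\<integral>\<^sup>+\<xi>. G \<xi> \<partial>seed_measure n Sy Sz SP p) \<le> (\<integral>\<^sup>+sy. (\<integral>\<^sup>+r. G (sy, r) \<partial>R) \<partial>PiM {..<n} Sy)"
      unfolding Xi_eq by (rule lower_fst) (use Rp in \<open>auto intro: prob_space_imp_sigma_finite\<close>)
    also have "\<dots> \<le> (\<integral>\<^sup>+sy. ennreal K + ennreal c2 * ennreal ((norm (Xf sy - y'))\<^sup>2) \<partial>PiM {..<n} Sy)"
    proof (rule nn_integral_mono)
      fix sy
      have "(\<integral>\<^sup>+r. G (sy, r) \<partial>R) \<le> ennreal (p * E (Xf sy) + (1 - p) * E z)" by (rule inner)
      also have "\<dots> \<le> ennreal (K + c2 * (norm (Xf sy - y'))\<^sup>2)" by (rule ennreal_leI[OF realb])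
      also have "\<dots> = ennreal K + ennreal c2 * ennreal ((norm (Xf sy - y'))\<^sup>2)"
        using K0 c20 by (simp add: ennreal_plus ennreal_mult)
      finally show "(\<integral>\<^sup>+r. G (sy, r) \<partial>R) \<le> ennreal K + ennreal c2 * ennreal ((norm (Xf sy - y'))\<^sup>2)" .
    qed
    also have "\<dots> \<le> ennreal K + ennreal c2 * (\<integral>\<^sup>+sy. ennreal ((norm (Xf sy - y'))\<^sup>2) \<partial>PiM {..<n} Sy)"
      by (rule lower_affine[OF PSy c20])
    also have "\<dots> \<le> ennreal K + ennreal c2 * (\<integral>\<^sup>+\<xi>. ennreal ((norm (Xf (fst \<xi>) - y'))\<^sup>2) \<partial>(PiM {..<n} Sy \<Otimes>\<^sub>M R))"
      by (intro add_left_mono mult_left_mono lower_fst_const[OF Rp]) auto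
    also have "\<dots> = ennreal K + ennreal c2 * (\<integral>\<^sup>+\<xi>. ennreal ((norm (alg_x P t st \<xi> - y'))\<^sup>2) \<partial>seed_measure n Sy Sz SP p)"
      unfolding Xi_eq xf ..
    finally show ?thesis .
  qed
  show ?thesis
    unfolding Let_def
    using final unfolding G_def K_def c2_def D_def f_def gradf_def Lmax_def st_def y'_def v_def z_def h_def .

qed

end
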